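(* Let $p\ne q$ be primes, $G=\mathbb{Z}_p^2\times\mathbb{Z}_q^2$, and let $S\subseteq G$ be spectral with $\gcd(|S|,p^2q^2)=pq$ and $pq<|S|<pq\min\{p,q\}$. Then for every nonzero $u\in\mathbb{Z}_p^2$ there is $x_u\in\mathbb{Z}_q^2$ with $\chi_{u+x_u}(S)=0$, and for every nonzero $v\in\mathbb{Z}_q^2$ there is $y_v\in\mathbb{Z}_p^2$ with $\chi_{v+y_v}(S)=0$.
   Context: Elements of $G$ are written $a+b$ with $a\in\mathbb{Z}_p^2$, $b\in\mathbb{Z}_q^2$. For $w=u+v$ define $\chi_w(a+b)=\exp\big(2\pi i(\tfrac{u\cdot a}{p}+\tfrac{v\cdot b}{q})\big)$ and $\chi(S)=\sum_{s\in S}\chi(s)$. $S$ is spectral if there is $\Lambda\subseteq G$ with $|\Lambda|=|S|$ and $\chi_{\lambda-\lambda'}(S)=0$ for all distinct $\lambda,\lambda'\in\Lambda$. *)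

theory Defs
  imports "HOL-Analysis.Analysis" "HOL-Computational_Algebra.Primes"
begin

text \<open>Z_n^2 represented by pairs of integers with residues in {0..<n};
  G = Z_p^2 x Z_q^2 represented by pairs (a, b) with a in Z_p^2, b in Z_q^2.
  The element a+b of G is the pair (a,b).\<close>

type_synonym elt = "(int \<times> int) \<times> (int \<times> int)"

definition Zsq :: "nat \<Rightarrow> (int \<times> int) set" where
  "Zsq n = {0..<int n} \<times> {0..<int n}"

definition Gset :: "nat \<Rightarrow> nat \<Rightarrow> elt set" where
  "Gset p q = Zsq p \<times> Zsq q"

definition dot2 :: "int \<times> int \<Rightarrow> int \<times> int \<Rightarrow> int" where
  "dot2 x y = fst x * fst y + snd x * snd y"

definition subG :: "nat \<Rightarrow> nat \<Rightarrow> elt \<Rightarrow> elt \<Rightarrow> elt" where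
  "subG p q x y =
     (((fst (fst x) - fst (fst y)) mod int p, (snd (fst x) - snd (fst y)) mod int p),
      ((fst (snd x) - fst (snd y)) mod int q, (snd (snd x) - snd (snd y)) mod int q))"

definition chi :: "nat \<Rightarrow> nat \<Rightarrow> elt \<Rightarrow> elt \<Rightarrow> complex" where
  "chi p q w g = cis (2 * pi * (real_of_int (dot2 (fst w) (fst g)) / real p
                              + real_of_int (dot2 (snd w) (snd g)) / real q))"

definition chiS :: "nat \<Rightarrow> nat \<Rightarrow> elt \<Rightarrow> elt set \<Rightarrow> complex" where
  "chiS p q w S = (\<Sum>s\<in>S. chi p q w s)"

definition spectral :: "nat \<Rightarrow> nat \<Rightarrow> elt set \<Rightarrow> bool" where
  "spectral p q S \<longleftrightarrow> (\<exists>L. L \<subseteq> Gset p q \<and> card L = card S \<and>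
      (\<forall>l\<in>L. \<forall>m\<in>L. l \<noteq> m \<longrightarrow> chiS p q (subG p q l m) S = 0))"

end

theory Submission
  imports Defs "Berlekamp_Zassenhaus.Poly_Mod_Finite_Field" "Berlekamp_Zassenhaus.Factor_Bound"
begin


hide_const (open) module.smult up_ring.monom up_ring.coeff

definition ev :: "int poly \<Rightarrow> complex \<Rightarrow> complex" where
  "ev P x = poly (of_int_poly P) x"

lemma ev_mult[simp]: "ev (P * Q) x = ev P x * ev Q x"
  unfolding ev_def by (simp add: hom_distribs)
lemma ev_add[simp]: "ev (P + Q) x = ev P x + ev Q x"
  unfolding ev_def by (simp add: hom_distribs)
lemma ev_diff[simp]: "ev (P - Q) x = ev P x - ev Q x"
  unfolding ev_def by (simp add: hom_distribs)
lemma ev_const[simp]: "ev [:c:] x = of_int c"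
  unfolding ev_def by (cases "c = 0") (simp_all add: map_poly_pCons)

interpretation rat_cplx: map_poly_inj_idom_hom "of_rat :: rat \<Rightarrow> complex"
  by unfold_locales
lemma ev_one[simp]: "ev 1 x = 1"
  unfolding ev_def by simp
lemma ev_pcompose: "ev (P \<circ>\<^sub>p Q) x = ev P (ev Q x)"
  unfolding ev_def by (simp add: hom_distribs poly_pcompose)
lemma ev_monom[simp]: "ev (Polynomial.monom c n) x = of_int c * x ^ n"
  unfolding ev_def by (simp add: poly_monom)

lemma ev_rat: "ev P x = poly (map_poly of_rat (of_int_poly P :: rat poly)) x"
  unfolding ev_def by (simp add: map_poly_map_poly o_def)

lemma irreducible_root_dvd:
  fixes f P :: "int poly"
  assumes irr: "irreducible f" and f0: "ev f x = 0" and P0: "ev P x = 0"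
  shows "f dvd P"
proof (rule ccontr)
  assume nd: "\<not> f dvd P"
  have "gcd f P dvd f" by simp
  from irreducibleD'[OF irr this] nd have "is_unit (gcd f P)"
    by (meson dvd_trans gcd_dvd2)
  hence g1: "gcd f P = 1" by (simp add: is_unit_gcd)
  define fQ where "fQ = (of_int_poly f :: rat poly)"
  define PQ where "PQ = (of_int_poly P :: rat poly)"
  have "gcd fQ PQ = 1" unfolding fQ_def PQ_def gcd_rat_to_gcd_int g1 by simp
  then have "fst (bezout_coefficients fQ PQ) * fQ + snd (bezout_coefficients fQ PQ) * PQ = 1"
    by (simp add: bezout_coefficients_fst_snd)
  then have "poly (map_poly of_rat (fst (bezout_coefficients fQ PQ) * fQ + snd (bezout_coefficients fQ PQ) * PQ)) x = (1::complex)"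
    by simp
  moreover have "poly (map_poly of_rat fQ) x = 0" using f0 unfolding fQ_def ev_rat by simp
  moreover have "poly (map_poly of_rat PQ) x = 0" using P0 unfolding PQ_def ev_rat by simp
  ultimately show False by (simp add: rat_cplx.hom_mult rat_cplx.hom_add)
qed



lemma fermat_int:
  assumes r: "prime (r::nat)"
  shows "[(a::int) ^ r = a] (mod int r)"
proof -
  define b where "b = nat (a mod int r)"
  have r0: "r > 0" using r prime_gt_0_nat by blast
  have ab: "[a = int b] (mod int r)" unfolding b_def using r0
    by (simp add: cong_def)
  have "[b ^ r = b] (mod r)"
  proof (cases "r dvd b")
    case True
    then have "[b = 0] (mod r)" by (simp add: cong_0_iff)
    moreover then have "[b ^ r = 0 ^ r] (mod r)" by (rule cong_pow)
    ultimately show ?thesis using r0 by (metis cong_sym cong_trans power_0_left not_gr0)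
  next
    case False
    from fermat_theorem[OF r False] have "[b ^ (r - 1) = 1] (mod r)" .
    then have "[b * b ^ (r - 1) = b * 1] (mod r)" by (rule cong_scalar_left)
    moreover have "b * b ^ (r - 1) = b ^ r" using r0 by (metis power_eq_if not_gr0)
    ultimately show ?thesis by simp
  qed
  then have "[int b ^ r = int b] (mod int r)"
    by (simp flip: cong_int_iff)
  moreover have "[a ^ r = int b ^ r] (mod int r)" using ab by (rule cong_pow)
  ultimately show ?thesis using ab by (meson cong_sym cong_trans)
qed

definition pc :: "int \<Rightarrow> int poly \<Rightarrow> int poly \<Rightarrow> bool" where
  "pc m A B \<longleftrightarrow> (\<exists>H. A = B + smult m H)"

definition pd :: "int \<Rightarrow> int poly \<Rightarrow> int poly \<Rightarrow> bool" where
  "pd m a b \<longleftrightarrow> (\<exists>q H. b = q * a + smult m H)"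

lemma pc_refl[simp]: "pc m A A"
  unfolding pc_def by (rule exI[of _ 0]) simp

lemma pc_sym: "pc m A B \<Longrightarrow> pc m B A"
  unfolding pc_def by (metis add_diff_cancel_right' diff_add_cancel smult_minus_right uminus_add_conv_diff add.commute)

lemma pc_trans: "pc m A B \<Longrightarrow> pc m B C \<Longrightarrow> pc m A C"
  unfolding pc_def by (metis add.assoc smult_add_right)

lemma pc_add: "pc m A B \<Longrightarrow> pc m C D \<Longrightarrow> pc m (A + C) (B + D)"
  unfolding pc_def by (metis (no_types, lifting) add.assoc add.left_commute smult_add_right)

lemma pc_mult: "pc m A B \<Longrightarrow> pc m C D \<Longrightarrow> pc m (A * C) (B * D)"
proof -
  assume "pc m A B" "pc m C D"
  then obtain H K where H: "A = B + smult m H" and K: "C = D + smult m K" unfolding pc_def by auto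
  have "A * C = B * D + smult m (H * D + B * K + smult m (H * K))"
    unfolding H K by (simp add: algebra_simps smult_add_right mult_smult_left mult_smult_right)
  then show ?thesis unfolding pc_def by blast
qed

lemma pc_pow: "pc m A B \<Longrightarrow> pc m (A ^ k) (B ^ k)"
  by (induct k) (auto intro: pc_mult)

lemma pc_smult_m[simp]: "pc m (A + smult m H) A"
  unfolding pc_def by blast

lemma pd_dvd: "a dvd b \<Longrightarrow> pd m a b"
  unfolding pd_def by (metis add.right_neutral dvdE mult.commute smult_0_right)

lemma pd_refl[simp]: "pd m a a"
  by (rule pd_dvd) simp

lemma pd_pc: "pd m a b \<Longrightarrow> pc m c b \<Longrightarrow> pd m a c"
  unfolding pd_def pc_def by (metis add.assoc smult_add_right)

lemma pd_trans: "pd m a b \<Longrightarrow> pd m b c \<Longrightarrow> pd m a c"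
proof -
  assume "pd m a b" "pd m b c"
  then obtain q H q' H' where 1: "b = q * a + smult m H" and 2: "c = q' * b + smult m H'"
    unfolding pd_def by auto
  have "c = (q' * q) * a + smult m (q' * H + H')"
    unfolding 2 1 by (simp add: algebra_simps smult_add_right mult_smult_right)
  then show ?thesis unfolding pd_def by blast
qed

lemma pd_add: "pd m a b \<Longrightarrow> pd m a c \<Longrightarrow> pd m a (b + c)"
proof -
  assume "pd m a b" "pd m a c"
  then obtain q H q' H' where 1: "b = q * a + smult m H" and 2: "c = q' * a + smult m H'"
    unfolding pd_def by auto
  have "b + c = (q + q') * a + smult m (H + H')"
    unfolding 2 1 by (simp add: algebra_simps smult_add_right)
  then show ?thesis unfolding pd_def by blast
qed

lemma pd_mult_right: "pd m a b \<Longrightarrow> pd m a (b * c)"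
proof -
  assume "pd m a b"
  then obtain q H where 1: "b = q * a + smult m H" unfolding pd_def by auto
  have "b * c = (q * c) * a + smult m (H * c)"
    unfolding 1 by (simp add: algebra_simps mult_smult_left)
  then show ?thesis unfolding pd_def by blast
qed

lemma pd_mult_left: "pd m a b \<Longrightarrow> pd m a (c * b)"
  by (metis mult.commute pd_mult_right)

lemma pd_mult_mono: "pd m a b \<Longrightarrow> pd m c d \<Longrightarrow> pd m (a * c) (b * d)"
proof -
  assume "pd m a b" "pd m c d"
  then obtain q H q' H' where 1: "b = q * a + smult m H" and 2: "d = q' * c + smult m H'"
    unfolding pd_def by auto
  have "b * d = (q * q') * (a * c) + smult m (q * a * H' + H * q' * c + smult m (H * H'))"
    unfolding 2 1 by (simp add: algebra_simps smult_add_right mult_smult_left mult_smult_right)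
  then show ?thesis unfolding pd_def by blast
qed

lemma pd_iff_dvdm: "pd m a b \<longleftrightarrow> poly_mod.dvdm m a b"
  unfolding pd_def using poly_mod.div_mod_imp_dvdm poly_mod.dvdm_imp_div_mod by metis

lemma pc_iff_Mp: "pc m A B \<longleftrightarrow> poly_mod.Mp m A = poly_mod.Mp m B"
proof
  assume "pc m A B"
  then obtain H where "A = B + smult m H" unfolding pc_def by auto
  then show "poly_mod.Mp m A = poly_mod.Mp m B"
    by (metis add.right_neutral poly_mod.Mp_smult_m_0 poly_mod.plus_Mp(2))
next
  assume e: "poly_mod.Mp m A = poly_mod.Mp m B"
  have "A = poly_mod.Mp m A + smult m (poly_mod.Dp m A)" by (rule poly_mod.Dp_Mp_eq)
  moreover have "B = poly_mod.Mp m B + smult m (poly_mod.Dp m B)" by (rule poly_mod.Dp_Mp_eq)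
  ultimately have "A = B + smult m (poly_mod.Dp m A - poly_mod.Dp m B)"
    using e by (simp add: algebra_simps smult_diff_right)
  then show "pc m A B" unfolding pc_def by blast
qed



lemma of_nat_mult_poly: "(of_nat n :: int poly) * X = smult (int n) X"
  by (simp add: of_nat_poly)

lemma frob_binom:
  fixes A B :: "int poly"
  assumes r: "prime (r::nat)"
  shows "pc (int r) ((A + B) ^ r) (A ^ r + B ^ r)"
proof -
  define T where "T k = (of_nat (r choose k) :: int poly) * A ^ k * B ^ (r - k)" for k
  have r0: "r > 0" using r prime_gt_0_nat by blast
  have "(A + B) ^ r = (\<Sum>k\<le>r. T k)" unfolding T_def by (rule binomial_ring)
  also have "\<dots> = (\<Sum>k\<in>{0, r}. T k) + (\<Sum>k\<in>{..r} - {0, r}. T k)"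
    by (subst sum.subset_diff[of "{0,r}" "{..r}"]) auto
  also have "(\<Sum>k\<in>{0, r}. T k) = A ^ r + B ^ r" using r0 by (simp add: T_def)
  also have "(\<Sum>k\<in>{..r} - {0, r}. T k) = (\<Sum>k\<in>{..r} - {0, r}. smult (int r) (smult (int ((r choose k) div r)) (A ^ k * B ^ (r - k))))"
  proof (rule sum.cong[OF refl])
    fix k assume "k \<in> {..r} - {0, r}"
    hence k: "k > 0" "k < r" by auto
    have "r dvd (r choose k)" by (rule dvd_choose_prime) (use k r0 r in auto)
    hence e: "r choose k = r * ((r choose k) div r)" by simp
    show "T k = smult (int r) (smult (int ((r choose k) div r)) (A ^ k * B ^ (r - k)))"
      unfolding T_def of_nat_mult_poly by (subst e) (simp add: mult.assoc)
  qed
  also have "\<dots> = smult (int r) (\<Sum>k\<in>{..r} - {0, r}. smult (int ((r choose k) div r)) (A ^ k * B ^ (r - k)))"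
    by (simp add: smult_sum2)
  finally show ?thesis unfolding pc_def by blast
qed

lemma frob_poly:
  fixes P :: "int poly"
  assumes r: "prime (r::nat)"
  shows "pc (int r) (P ^ r) (P \<circ>\<^sub>p Polynomial.monom 1 r)"
proof (induct P)
  case 0
  have "r > 0" using r prime_gt_0_nat by blast
  then show ?case by (simp add: zero_power)
next
  case (pCons a Q)
  have r0: "r > 0" using r prime_gt_0_nat by blast
  have e: "pCons a Q = [:a:] + Polynomial.monom 1 1 * Q"
    by (simp add: monom_Suc pCons_one)
  have "pc (int r) ((pCons a Q) ^ r) ([:a:] ^ r + (Polynomial.monom 1 1 * Q) ^ r)"
    unfolding e by (rule frob_binom[OF r])
  moreover have "pc (int r) ([:a:] ^ r) [:a:]"
  proof -
    from cong_sym[OF fermat_int[OF r, of a]] obtain c where "a ^ r = a + int r * c"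
      unfolding cong_iff_lin by blast
    hence "[:a:] ^ r = [:a:] + smult (int r) [:c:]" by (simp add: poly_const_pow)
    then show ?thesis unfolding pc_def by blast
  qed
  moreover have "pc (int r) ((Polynomial.monom 1 1 * Q) ^ r) (Polynomial.monom 1 r * (Q \<circ>\<^sub>p Polynomial.monom 1 r))"
  proof -
    have "(Polynomial.monom 1 1 * Q) ^ r = Polynomial.monom 1 r * Q ^ r"
      using x_pow_n[of r, where ?'a = int] by (simp add: power_mult_distrib)
    then show ?thesis using pc_mult[OF pc_refl pCons(2)] by simp
  qed
  ultimately have "pc (int r) ((pCons a Q) ^ r) ([:a:] + Polynomial.monom 1 r * (Q \<circ>\<^sub>p Polynomial.monom 1 r))"
    by (meson pc_add pc_trans)
  then show ?case by (simp add: pcompose_pCons)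
qed



abbreviation cop :: "'a::algebraic_semidom \<Rightarrow> 'a \<Rightarrow> bool" where
  "cop \<equiv> Rings.algebraic_semidom_class.coprime"

lemma ev_prod_mset: "ev (prod_mset M) x = prod_mset (image_mset (\<lambda>f. ev f x) M)"
  by (induct M) auto

lemma exists_irr_root:
  fixes P :: "int poly"
  assumes P0: "P \<noteq> 0" and r: "ev P x = 0"
  shows "\<exists>f. irreducible f \<and> f dvd P \<and> ev f x = 0"
proof -
  have "P dvd prod_mset (prime_factorization P)"
    using prod_mset_prime_factorization_weak[OF P0] by (metis dvd_normalize_iff dvd_refl)
  then obtain w where "prod_mset (prime_factorization P) = P * w" by (elim dvdE)
  hence "ev (prod_mset (prime_factorization P)) x = 0" using r by simp
  hence "0 \<in># image_mset (\<lambda>f. ev f x) (prime_factorization P)"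
    unfolding ev_prod_mset by (simp add: prod_mset_zero_iff)
  then obtain f where f: "f \<in># prime_factorization P" "ev f x = 0" by auto
  have "prime f" using f(1) by (rule in_prime_factors_imp_prime)
  hence "irreducible f" by (intro prime_elem_imp_irreducible prime_imp_prime_elem)
  moreover have "f dvd P" using f(1) by (rule in_prime_factors_imp_dvd)
  ultimately show ?thesis using f(2) by blast
qed

lemma pd_smult: "pd m a b \<Longrightarrow> pd m a (smult c b)"
proof -
  assume "pd m a b"
  then have "pd m a ([:c:] * b)" by (rule pd_mult_left)
  then show ?thesis by simp
qed

lemma pd_neg: "pd m a b \<Longrightarrow> pd m a (- b)"
  by (metis pd_smult smult_1_left smult_minus_left)

lemma pd_diff: "pd m a b \<Longrightarrow> pd m a c \<Longrightarrow> pd m a (b - c)"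
  by (metis diff_conv_add_uminus pd_add pd_neg)

lemma monic_nodvd1:
  assumes m: "m > 1" and d: "monic d" "degree d > 0" and dv: "pd m d 1"
  shows False
proof -
  interpret pm: poly_mod_2 m using m unfolding poly_mod_2_def .
  have "pm.dvdm d 1" using dv by (simp add: pd_iff_dvdm)
  from pm.dvdm_imp_degree_le[OF this d(1) _ m] d(2) show False by simp
qed

lemma common_factor:
  fixes f g :: "int poly"
  assumes m: "prime (m::int)" and f0: "poly_mod.Mp m f \<noteq> 0"
  shows "\<exists>d. monic d \<and> pd m d f \<and> pd m d g \<and> (\<exists>a b. pc m d (a * f + b * g))"
proof -
  have m1: "m > 1" using m prime_gt_1_int by blast
  interpret pm: poly_mod_2 m using m1 unfolding poly_mod_2_def .
  define P where "P d \<longleftrightarrow> pm.Mp d = d \<and> d \<noteq> 0 \<and> (\<exists>a b. pc m d (a * f + b * g))" for d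
  have pcf: "pc m (pm.Mp f) (1 * f + 0 * g)" unfolding pc_iff_Mp by simp
  have "P (pm.Mp f)" unfolding P_def
  proof (intro conjI)
    show "pm.Mp (pm.Mp f) = pm.Mp f" by simp
    show "pm.Mp f \<noteq> 0" by (rule f0)
    show "\<exists>a b. pc m (pm.Mp f) (a * f + b * g)" using pcf by blast
  qed
  from ex_has_least_nat[of P, OF this, of degree] obtain d0 where
    d0: "P d0" and minl: "\<And>e. P e \<Longrightarrow> degree d0 \<le> degree e" by blast
  from d0 obtain a b where ab: "pc m d0 (a * f + b * g)" and Md0: "pm.Mp d0 = d0" and nz: "d0 \<noteq> 0"
    unfolding P_def by blast
  have "lead_coeff d0 = coeff (pm.Mp d0) (degree d0)" using Md0 by simp
  also have "\<dots> = lead_coeff d0 mod m" by (simp add: pm.Mp_coeff pm.M_def)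
  finally have ld: "lead_coeff d0 = lead_coeff d0 mod m" .
  have l0: "lead_coeff d0 \<noteq> 0" using nz by simp
  have nd: "\<not> m dvd lead_coeff d0"
  proof
    assume "m dvd lead_coeff d0"
    hence "lead_coeff d0 mod m = 0" by simp
    with ld l0 show False by simp
  qed
  have "cop m (lead_coeff d0)" using prime_imp_coprime[OF m nd] .
  hence "cop (lead_coeff d0) m" by (simp add: Rings.algebraic_semidom_class.coprime_commute)
  then obtain c where c: "[lead_coeff d0 * c = 1] (mod m)" using cong_solve_coprime_int by blast
  have lc: "(c * lead_coeff d0) mod m = 1" using c m1 unfolding cong_def by (simp add: mult.commute)
  have c0: "c \<noteq> 0"
  proof
    assume "c = 0"
    with lc show False by simp
  qed
  define d where "d = pm.Mp (smult c d0)"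
  have lc': "lead_coeff (smult c d0) mod m \<noteq> 0" using lc c0 by simp
  have degd: "degree d = degree d0"
    unfolding d_def using pm.degree_m_eq[OF lc' m1] c0 by simp
  have mon: "monic d"
  proof -
    have "lead_coeff d = coeff (pm.Mp (smult c d0)) (degree d0)" using degd d_def by simp
    also have "\<dots> = (c * lead_coeff d0) mod m" by (simp add: pm.Mp_coeff pm.M_def)
    finally show ?thesis using lc by simp
  qed
  have dnz: "d \<noteq> 0" using mon by auto
  have comb: "pc m d (smult c a * f + smult c b * g)"
  proof -
    have "pc m d (smult c d0)" unfolding d_def pc_iff_Mp by simp
    moreover have "pc m (smult c d0) (smult c (a * f + b * g))"
      using pc_mult[OF pc_refl ab, of "[:c:]"] by simp
    ultimately have "pc m d (smult c (a * f + b * g))" by (rule pc_trans)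
    then show ?thesis by (simp add: smult_add_right)
  qed
  have Pd: "P d" unfolding P_def
  proof (intro conjI)
    show "pm.Mp d = d" unfolding d_def by simp
    show "d \<noteq> 0" by (rule dnz)
    show "\<exists>a b. pc m d (a * f + b * g)" using comb by blast
  qed
  have divi: "pd m d X" if X: "X = \<alpha> * f + \<beta> * g" for X \<alpha> \<beta>
  proof -
    obtain Q R where QR: "pseudo_divmod X d = (Q, R)" by (cases "pseudo_divmod X d")
    from pseudo_divmod[OF dnz QR] mon have XQ: "X = d * Q + R" and Rd: "R = 0 \<or> degree R < degree d"
      by simp_all
    show ?thesis
    proof (cases "pm.Mp R = 0")
      case True
      have "R = pm.Mp R + smult m (pm.Dp R)" by (rule pm.Dp_Mp_eq)
      with True have "X = Q * d + smult m (pm.Dp R)" using XQ by (simp add: mult.commute)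
      then show ?thesis unfolding pd_def by blast
    next
      case False
      have "pc m (d * Q) ((smult c a * f + smult c b * g) * Q)" by (rule pc_mult[OF comb pc_refl])
      hence "pc m (X - d * Q) (X - (smult c a * f + smult c b * g) * Q)"
        by (metis diff_conv_add_uminus pc_add pc_refl pc_mult mult_minus1)
      moreover have "X - (smult c a * f + smult c b * g) * Q = (\<alpha> - smult c a * Q) * f + (\<beta> - smult c b * Q) * g"
        unfolding X by (simp add: algebra_simps)
      ultimately have "pc m R ((\<alpha> - smult c a * Q) * f + (\<beta> - smult c b * Q) * g)"
        using XQ by (simp add: algebra_simps)
      hence "pc m (pm.Mp R) ((\<alpha> - smult c a * Q) * f + (\<beta> - smult c b * Q) * g)"
        by (metis pc_iff_Mp pm.Mp_Mp)
      hence "P (pm.Mp R)" unfolding P_def using False by auto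
      from minl[OF this] degd have "degree d \<le> degree (pm.Mp R)" by simp
      moreover have "degree (pm.Mp R) \<le> degree R" by (rule pm.degree_m_le)
      moreover have "R \<noteq> 0" using False by auto
      ultimately show ?thesis using Rd by simp
    qed
  qed
  have "pd m d f" using divi[of f 1 0] by simp
  moreover have "pd m d g" using divi[of g 0 1] by simp
  ultimately show ?thesis using mon comb by blast
qed

lemma dedekind_step:
  fixes x :: complex and P :: "int poly"
  assumes r: "prime (r::nat)" and rn: "\<not> r dvd n" and n: "n > 0"
    and xn: "x ^ n = 1" and P: "ev P x = 0"
  shows "ev P (x ^ r) = 0"
proof -
  define E :: "int poly" where "E = Polynomial.monom 1 n - 1"
  have evE: "ev E y = y ^ n - 1" for y unfolding E_def by simp
  have degE: "degree E = n"
  proof -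
    have "E = Polynomial.monom 1 n + (- 1)" unfolding E_def by simp
    also have "degree \<dots> = degree (Polynomial.monom (1::int) n)"
      by (rule degree_add_eq_left) (use n in \<open>simp add: degree_monom_eq\<close>)
    finally show ?thesis by (simp add: degree_monom_eq)
  qed
  have E0: "E \<noteq> 0" using degE n by auto
  have lE: "lead_coeff E = 1" unfolding degE unfolding E_def using n
    by (simp add: coeff_monom coeff_1)
  obtain f where f: "irreducible f" "f dvd E" "ev f x = 0"
    using exists_irr_root[OF E0, of x] evE xn by auto
  have "(x ^ r) ^ n = (x ^ n) ^ r" by (simp add: power_mult[symmetric] mult.commute)
  hence xrn: "(x ^ r) ^ n = 1" using xn by simp
  obtain g where g: "irreducible g" "g dvd E" "ev g (x ^ r) = 0"
    using exists_irr_root[OF E0, of "x ^ r"] evE xrn by auto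
  have fP: "f dvd P" using irreducible_root_dvd[OF f(1) f(3) P] .
  show ?thesis
  proof (rule ccontr)
    assume nP: "ev P (x ^ r) \<noteq> 0"
    have nz: "ev f (x ^ r) \<noteq> 0" using fP nP by (auto elim!: dvdE)
    have nfg: "\<not> f dvd g"
    proof
      assume "f dvd g"
      from irreducibleD'[OF g(1) this] f(1) have "g dvd f" by (auto simp: irreducible_not_unit)
      then show False using nz g(3) by (auto elim!: dvdE)
    qed
    have fg: "f * g dvd E"
    proof -
      from g(2) obtain e where e: "E = g * e" by (elim dvdE)
      have pf: "prime_elem f" using f(1) by (rule irreducible_imp_prime_poly)
      have "f dvd g * e" using f(2) e by simp
      from prime_elem_dvd_multD[OF pf this] nfg have "f dvd e" by auto
      then show ?thesis using e by (simp add: mult.commute mult_dvd_mono)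
    qed
    have fcomp: "f dvd g \<circ>\<^sub>p Polynomial.monom 1 r"
      by (rule irreducible_root_dvd[OF f(1) f(3)]) (simp add: ev_pcompose g(3))
    have lf: "lead_coeff f dvd 1"
    proof -
      from fg obtain w where "E = f * g * w" by (elim dvdE)
      hence "lead_coeff f * (lead_coeff g * lead_coeff w) = 1" using lE by (simp add: lead_coeff_mult mult.assoc)
      then show ?thesis by (metis dvdI)
    qed
    have degf: "degree f > 0"
    proof (rule ccontr)
      assume "\<not> degree f > 0"
      then obtain c where c: "f = [:c:]" by (metis degree_eq_zeroE gr0I)
      with f(3) have "c = 0" by simp
      with c f(1) show False by simp
    qed
    define m where "m = int r"
    have mp: "prime m" unfolding m_def using r by simp
    have m1: "m > 1" unfolding m_def using r prime_gt_1_nat by simp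
    interpret pm: poly_mod_2 m using m1 unfolding poly_mod_2_def .
    have lfm: "lead_coeff f mod m \<noteq> 0"
    proof
      assume "lead_coeff f mod m = 0"
      hence "m dvd lead_coeff f" by auto
      from this lf have "m dvd 1" by (rule dvd_trans)
      with m1 show False by auto
    qed
    have degm: "degree (pm.Mp f) = degree f" using pm.degree_m_eq[OF lfm m1] .
    have Mf0: "pm.Mp f \<noteq> 0" using degm degf by auto
    have lsq: "lead_coeff f * lead_coeff f = 1" using lf by (auto simp: zdvd1_eq abs_if split: if_splits)
    define f1 where "f1 = smult (lead_coeff f) f"
    have fnz: "f \<noteq> 0" using degf by auto
    have monf1: "monic f1" unfolding f1_def using lsq fnz by simp
    have degf1: "degree f1 > 0" unfolding f1_def using degf lsq by (cases "f = 0") auto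
    have ff1: "f = [:lead_coeff f:] * f1" unfolding f1_def using lsq by simp
    have nf1: "\<not> pd m f 1"
    proof
      assume "pd m f 1"
      moreover have "pd m f1 f" using ff1 by (metis pd_dvd dvd_triv_right)
      ultimately have "pd m f1 1" using pd_trans by blast
      with monic_nodvd1[OF m1 monf1 degf1] show False by simp
    qed
    have "pd m f (g \<circ>\<^sub>p Polynomial.monom 1 r)" by (rule pd_dvd[OF fcomp])
    moreover have "pc m (g ^ r) (g \<circ>\<^sub>p Polynomial.monom 1 r)" unfolding m_def by (rule frob_poly[OF r])
    ultimately have fgr: "pd m f (g ^ r)" by (rule pd_pc)
    obtain d a b where d: "monic d" "pd m d f" "pd m d g" and dab: "pc m d (a * f + b * g)"
      using common_factor[OF mp Mf0, of g] by blast
    show False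
    proof (cases "degree d = 0")
      case True
      with d(1) have d1: "d = 1" by (metis monic_degree_0)
      have r0: "r > 0" using r prime_gt_0_nat by blast
      have "pc m 1 (a * f + b * g)" using dab d1 by simp
      hence "pc m (1 ^ r) ((a * f + b * g) ^ r)" by (rule pc_pow)
      moreover have "pc m ((a * f + b * g) ^ r) ((a * f) ^ r + (b * g) ^ r)" unfolding m_def by (rule frob_binom[OF r])
      ultimately have c1: "pc m 1 ((a * f) ^ r + (b * g) ^ r)" by (simp add: pc_trans)
      have "pd m f ((a * f) ^ r)" using r0 by (intro pd_dvd) (simp add: power_mult_distrib dvd_power)
      moreover have "pd m f ((b * g) ^ r)" using fgr by (simp add: power_mult_distrib pd_mult_left)
      ultimately have "pd m f ((a * f) ^ r + (b * g) ^ r)" by (rule pd_add)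
      hence "pd m f 1" using c1 by (rule pd_pc)
      with nf1 show False by simp
    next
      case False
      hence degd: "degree d > 0" by simp
      have "pd m (d * d) (f * g)" using pd_mult_mono[OF d(2) d(3)] .
      hence "pd m (d * d) E" using pd_dvd[OF fg] pd_trans by blast
      then obtain q H where qH: "E = q * (d * d) + smult m H" unfolding pd_def by auto
      have "pderiv E = d * (pderiv q * d + q * pderiv d + q * pderiv d) + smult m (pderiv H)"
        unfolding qH by (simp add: pderiv_add pderiv_mult pderiv_smult algebra_simps)
      hence hdE: "pd m d (pderiv E)" unfolding pd_def by (metis mult.commute)
      have hE: "pd m d E" using qH unfolding pd_def by (metis mult.assoc)
      have pE: "pderiv E = Polynomial.monom (int n) (n - 1)"
        unfolding E_def by (simp add: pderiv_monom pderiv_diff)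
      have "Polynomial.monom 1 1 * pderiv E = Polynomial.monom (int n) n"
        unfolding pE using n by (simp add: mult_monom)
      hence key: "[:- int n:] = smult (int n) E - Polynomial.monom 1 1 * pderiv E"
        unfolding E_def by (simp add: smult_diff_right smult_monom)
      have hn: "pd m d [:- int n:]"
        unfolding key by (intro pd_diff pd_smult pd_mult_left hE hdE)
      have "Rings.algebraic_semidom_class.coprime r n" using r rn by (simp add: prime_imp_coprime)
      hence "Rings.algebraic_semidom_class.coprime (int n) m" unfolding m_def
        by (simp add: Rings.algebraic_semidom_class.coprime_commute)
      then obtain u where "[int n * u = 1] (mod m)" using cong_solve_coprime_int by blast
      then obtain k where k: "1 = int n * u + m * k" unfolding cong_iff_lin by blast
      have "1 = [:-u:] * [:- int n:] + smult m [:k:]"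
        by (simp add: k[symmetric] smult_add_right)
      hence "pc m 1 ([:-u:] * [:- int n:])" unfolding pc_def by blast
      with pd_mult_left[OF hn] have "pd m d 1" by (rule pd_pc)
      with monic_nodvd1[OF m1 d(1) degd] show False by simp
    qed
  qed
qed



lemma galois_pow:
  fixes x :: complex
  assumes n: "n > 0" and xn: "x ^ n = 1" and P: "ev P x = 0"
  shows "t > 0 \<Longrightarrow> Rings.algebraic_semidom_class.coprime t n \<Longrightarrow> ev P (x ^ t) = 0"
proof (induct t rule: less_induct)
  case (less t)
  show ?case
  proof (cases "t = 1")
    case True then show ?thesis using P by simp
  next
    case False
    then obtain r where r: "prime r" "r dvd t" using less(2) by (metis prime_factor_nat)
    then obtain t' where t': "t = r * t'" by (elim dvdE)
    have t'0: "t' > 0" using less(2) t' by (cases "t' = 0") auto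
    have r1: "r > 1" using r(1) prime_gt_1_nat by blast
    have lt: "t' < t" using t' t'0 r1 by simp
    have cop: "Rings.algebraic_semidom_class.coprime t' n" using less(3) t'
      by (simp add: GCD.coprime_mult_left_iff)
    have rn: "\<not> r dvd n"
    proof
      assume "r dvd n"
      with r(2) less(3) have "is_unit r" by (meson Rings.algebraic_semidom_class.coprime_common_divisor)
      with r(1) show False by simp
    qed
    have IH: "ev P (x ^ t') = 0" using less(1)[OF lt t'0 cop] .
    have "(x ^ t') ^ n = 1" by (metis xn power_mult power_mult_distrib mult.commute power_one)
    moreover have "x ^ t = (x ^ t') ^ r" unfolding t' by (simp add: power_mult[symmetric] mult.commute)
    ultimately show ?thesis using dedekind_step[OF r(1) rn n _ IH] by simp
  qed
qed

definition ee :: "nat \<Rightarrow> int \<Rightarrow> complex" where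
  "ee n a = cis (2 * pi * of_int a / of_nat n)"

lemma ee_add: "ee n (a + b) = ee n a * ee n b"
  unfolding ee_def cis_mult by (simp add: add_divide_distrib distrib_left)

lemma ee_n: "n > 0 \<Longrightarrow> ee n (int n * c) = 1"
proof -
  assume "n > 0"
  hence "2 * pi * of_int (int n * c) / of_nat n = 2 * pi * of_int c" by simp
  then show ?thesis unfolding ee_def by simp
qed

lemma ee_mod: "n > 0 \<Longrightarrow> ee n (a mod int n) = ee n a"
proof -
  assume n: "n > 0"
  have "a = a mod int n + int n * (a div int n)" by simp
  hence "ee n a = ee n (a mod int n) * ee n (int n * (a div int n))" by (metis ee_add)
  with ee_n[OF n] show ?thesis by simp
qed

lemma ee_cong: "n > 0 \<Longrightarrow> [a = b] (mod int n) \<Longrightarrow> ee n a = ee n b"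
  unfolding cong_def by (metis ee_mod)

lemma ee_pow: "ee n a ^ k = ee n (int k * a)"
  unfolding ee_def by (subst Complex.DeMoivre) (simp add: mult_ac)

lemma ee_nonneg: "0 \<le> a \<Longrightarrow> ee n a = ee n 1 ^ nat a"
  by (simp add: ee_pow)

lemma galois_sum:
  fixes e :: "'a \<Rightarrow> int"
  assumes n: "n > 0" and S: "finite S" and z: "(\<Sum>s\<in>S. ee n (e s)) = 0"
    and t: "t > 0" "Rings.algebraic_semidom_class.coprime t n"
  shows "(\<Sum>s\<in>S. ee n (int t * e s)) = 0"
proof -
  define P :: "int poly" where "P = (\<Sum>s\<in>S. Polynomial.monom 1 (nat (e s mod int n)))"
  have evP: "ev P y = (\<Sum>s\<in>S. y ^ nat (e s mod int n))" for y
    unfolding P_def ev_def by (simp add: hom_distribs poly_sum poly_monom)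
  have xn: "ee n 1 ^ n = 1" using ee_n[OF n, of 1] by (simp add: ee_pow)
  have "ev P (ee n 1) = (\<Sum>s\<in>S. ee n (e s))"
    unfolding evP by (intro sum.cong refl) (simp add: ee_nonneg[symmetric] n ee_mod)
  with z have "ev P (ee n 1) = 0" by simp
  from galois_pow[OF n xn this t] have "ev P (ee n 1 ^ t) = 0" .
  moreover have "ev P (ee n 1 ^ t) = (\<Sum>s\<in>S. ee n (int t * e s))"
  proof -
    have "ev P (ee n 1 ^ t) = (\<Sum>s\<in>S. ee n (int t * (e s mod int n)))"
      unfolding evP using n by (intro sum.cong refl) (simp add: ee_pow power_mult[symmetric] mult.commute pos_mod_sign)
    also have "\<dots> = (\<Sum>s\<in>S. ee n (int t * e s))"
      by (intro sum.cong refl ee_cong n) (simp add: cong_def mod_mult_right_eq)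
    finally show ?thesis .
  qed
  ultimately show ?thesis by simp
qed



definition key :: "nat \<Rightarrow> nat \<Rightarrow> elt \<Rightarrow> elt \<Rightarrow> int" where
  "key p q w g = int q * dot2 (fst w) (fst g) + int p * dot2 (snd w) (snd g)"

lemma div_aux: fixes x y :: real assumes "p > 0" "q > 0"
  shows "(real q * x + real p * y) / (real p * real q) = x / real p + y / real q"
proof -
  have a: "real p \<noteq> 0" "real q \<noteq> 0" using assms by auto
  have "(real q * x + real p * y) / (real p * real q) = (real q * x) / (real p * real q) + (real p * y) / (real p * real q)"
    by (rule add_divide_distrib)
  also have "(real q * x) / (real p * real q) = x / real p" using a by simp
  also have "(real p * y) / (real p * real q) = y / real q" using a by simp
  finally show ?thesis .
qed

lemma chi_ee: assumes "p > 0" "q > 0" shows "chi p q w g = ee (p * q) (key p q w g)"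
proof -
  have "2 * pi * real_of_int (key p q w g) / real (p * q) =
        2 * pi * ((real q * real_of_int (dot2 (fst w) (fst g)) + real p * real_of_int (dot2 (snd w) (snd g))) / (real p * real q))"
    unfolding key_def by simp
  also have "\<dots> = 2 * pi * (real_of_int (dot2 (fst w) (fst g)) / real p + real_of_int (dot2 (snd w) (snd g)) / real q)"
    using div_aux[OF assms] by simp
  finally show ?thesis unfolding chi_def ee_def by simp
qed

lemma chiS_ee: "p > 0 \<Longrightarrow> q > 0 \<Longrightarrow> chiS p q w S = (\<Sum>s\<in>S. ee (p * q) (key p q w s))"
  unfolding chiS_def by (simp add: chi_ee)

lemma ee_cong_dvd: "n > 0 \<Longrightarrow> int n dvd (a - b) \<Longrightarrow> ee n a = ee n b"
  by (rule ee_cong) (auto simp: cong_iff_dvd_diff dvd_diff_commute)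

lemma dot2_diff_dvd:
  assumes "m dvd (fst u - fst u')" "m dvd (snd u - snd u')"
  shows "m dvd (dot2 u g - dot2 u' g)"
proof -
  have "dot2 u g - dot2 u' g = (fst u - fst u') * fst g + (snd u - snd u') * snd g"
    unfolding dot2_def by (simp add: algebra_simps)
  with assms show ?thesis by simp
qed

lemma key_cong:
  assumes p: "p > 0" and q: "q > 0"
    and d1: "int p dvd (fst (fst w) - fst (fst w'))" "int p dvd (snd (fst w) - snd (fst w'))"
    and d2: "int q dvd (fst (snd w) - fst (snd w'))" "int q dvd (snd (snd w) - snd (snd w'))"
  shows "ee (p * q) (key p q w g) = ee (p * q) (key p q w' g)"
proof (rule ee_cong_dvd)
  show "p * q > 0" using p q by simp
  obtain c1 where c1: "dot2 (fst w) (fst g) - dot2 (fst w') (fst g) = int p * c1"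
    using dot2_diff_dvd[OF d1, of "fst g"] by (elim dvdE)
  obtain c2 where c2: "dot2 (snd w) (snd g) - dot2 (snd w') (snd g) = int q * c2"
    using dot2_diff_dvd[OF d2, of "snd g"] by (elim dvdE)
  have "key p q w g - key p q w' g = int q * (dot2 (fst w) (fst g) - dot2 (fst w') (fst g))
        + int p * (dot2 (snd w) (snd g) - dot2 (snd w') (snd g))"
    unfolding key_def by (simp add: algebra_simps)
  also have "\<dots> = int (p * q) * (c1 + c2)" unfolding c1 c2 by (simp add: algebra_simps)
  finally show "int (p * q) dvd key p q w g - key p q w' g" by (rule dvdI)
qed

lemma chiS_cong:
  assumes p: "p > 0" and q: "q > 0"
    and d1: "int p dvd (fst (fst w) - fst (fst w'))" "int p dvd (snd (fst w) - snd (fst w'))"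
    and d2: "int q dvd (fst (snd w) - fst (snd w'))" "int q dvd (snd (snd w) - snd (snd w'))"
  shows "chiS p q w S = chiS p q w' S"
  unfolding chiS_ee[OF p q] by (intro sum.cong refl key_cong[OF p q d1 d2])

lemma galois_sum_int:
  fixes e :: "'a \<Rightarrow> int"
  assumes n: "n > 1" and S: "finite S" and z: "(\<Sum>s\<in>S. ee n (e s)) = 0"
    and t: "cop t (int n)"
  shows "(\<Sum>s\<in>S. ee n (t * e s)) = 0"
proof -
  define t' where "t' = nat (t mod int n)"
  have tt': "int t' = t mod int n" unfolding t'_def using n by simp
  have c1: "cop (int t') (int n)" unfolding tt'
    by (rule cong_imp_coprime[OF _ t]) (simp add: cong_def)
  hence c2: "cop t' n" by simp
  have "t' > 0"
  proof (rule ccontr)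
    assume "\<not> t' > 0"
    hence "t' = 0" by simp
    with c2 have "n = 1" by simp
    with n show False by simp
  qed
  from galois_sum[OF _ S z this c2] n have "(\<Sum>s\<in>S. ee n (int t' * e s)) = 0" by simp
  moreover have eq: "ee n (int t' * e s) = ee n (t * e s)" for s
  proof (rule ee_cong)
    show "n > 0" using n by simp
    show "[int t' * e s = t * e s] (mod int n)" unfolding tt'
      by (rule cong_mult) (simp_all add: cong_def)
  qed
  ultimately show ?thesis using sum.cong[OF refl eq] by simp
qed

lemma chiS_galois:
  assumes p: "prime p" and q: "prime q" and pq: "p \<noteq> q" and S: "finite S"
    and z: "chiS p q w S = 0" and s: "cop s (int p)" and t: "cop t (int q)"
  shows "chiS p q ((s * fst (fst w), s * snd (fst w)), (t * fst (snd w), t * snd (snd w))) S = 0"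
proof -
  have p0: "p > 0" and q0: "q > 0" using p q prime_gt_0_nat by auto
  have cpq: "cop (int p) (int q)" using p q pq by (simp add: primes_coprime)
  obtain T where T: "[T = s] (mod int p)" "[T = t] (mod int q)"
    using binary_chinese_remainder_int[OF cpq] by blast
  have "cop T (int p)" using cong_imp_coprime[OF cong_sym[OF T(1)] s] .
  moreover have "cop T (int q)" using cong_imp_coprime[OF cong_sym[OF T(2)] t] .
  ultimately have cT: "cop T (int (p * q))" by simp
  have "p > 1" "q > 1" using p q prime_gt_1_nat by auto
  hence n1: "p * q > 1" by (rule less_1_mult)
  from galois_sum_int[OF n1 S _ cT, of "key p q w"] z
  have z2: "(\<Sum>g\<in>S. ee (p * q) (T * key p q w g)) = 0" by (simp add: chiS_ee[OF p0 q0])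
  moreover have eq: "ee (p * q) (T * key p q w g) =
     ee (p * q) (key p q ((s * fst (fst w), s * snd (fst w)), (t * fst (snd w), t * snd (snd w))) g)" for g
  proof (rule ee_cong_dvd)
    show "p * q > 0" using p0 q0 by simp
    obtain a where a: "T - s = int p * a" using T(1) unfolding cong_iff_dvd_diff by (elim dvdE)
    obtain b where b: "T - t = int q * b" using T(2) unfolding cong_iff_dvd_diff by (elim dvdE)
    have "T * key p q w g - key p q ((s * fst (fst w), s * snd (fst w)), (t * fst (snd w), t * snd (snd w))) g
       = int q * ((T - s) * dot2 (fst w) (fst g)) + int p * ((T - t) * dot2 (snd w) (snd g))"
      unfolding key_def dot2_def by (simp add: algebra_simps)
    also have "\<dots> = int (p * q) * (a * dot2 (fst w) (fst g) + b * dot2 (snd w) (snd g))"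
      unfolding a b by (simp add: algebra_simps)
    finally show "int (p * q) dvd T * key p q w g - key p q ((s * fst (fst w), s * snd (fst w)), (t * fst (snd w), t * snd (snd w))) g"
      by (rule dvdI)
  qed
  have "chiS p q ((s * fst (fst w), s * snd (fst w)), (t * fst (snd w), t * snd (snd w))) S =
        (\<Sum>g\<in>S. ee (p * q) (T * key p q w g))"
    unfolding chiS_ee[OF p0 q0] by (rule sum.cong[OF refl]) (rule eq[symmetric])
  then show ?thesis using z2 by (rule trans)
qed



lemma inv_mod_prime:
  assumes p: "prime (p::nat)" and j: "\<not> int p dvd j"
  obtains v where "int p dvd (j * v - 1)" "cop v (int p)"
proof -
  have pp: "prime (int p)" using p by simp
  have "cop (int p) j" using prime_imp_coprime[OF pp j] .
  hence "cop j (int p)" by (simp add: Rings.algebraic_semidom_class.coprime_commute)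
  then obtain v where v: "[j * v = 1] (mod int p)" using cong_solve_coprime_int by blast
  hence d: "int p dvd (j * v - 1)" by (simp add: cong_iff_dvd_diff)
  have "cop (j * v) (int p)" using cong_imp_coprime[OF cong_sym[OF v]] by simp
  hence "cop v (int p)" by simp
  with d show ?thesis by (rule that)
qed

lemma kernel2:
  assumes p: "prime (p::nat)" and u: "\<not> (int p dvd u1 \<and> int p dvd u2)"
    and d: "int p dvd (u2 * d1 - u1 * d2)"
  shows "\<exists>j. int p dvd (d1 - j * u1) \<and> int p dvd (d2 - j * u2)"
proof (cases "int p dvd u1")
  case False
  then obtain v where v: "int p dvd (u1 * v - 1)" by (rule inv_mod_prime[OF p])
  have "d1 - (d1 * v) * u1 = - d1 * (u1 * v - 1)" by (simp add: algebra_simps)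
  hence 1: "int p dvd (d1 - (d1 * v) * u1)" using v by (metis dvd_mult)
  have "d2 - (d1 * v) * u2 = d2 * (u1 * v - 1) * (-1) + v * (u2 * d1 - u1 * d2) * (-1) + 0"
    by (simp add: algebra_simps)
  hence 2: "int p dvd (d2 - (d1 * v) * u2)" using v d by (simp add: dvd_add dvd_mult2)
  from 1 2 show ?thesis by blast
next
  case True
  with u have "\<not> int p dvd u2" by blast
  then obtain v where v: "int p dvd (u2 * v - 1)" by (rule inv_mod_prime[OF p])
  have "d2 - (d2 * v) * u2 = - d2 * (u2 * v - 1)" by (simp add: algebra_simps)
  hence 2: "int p dvd (d2 - (d2 * v) * u2)" using v by (metis dvd_mult)
  have "d1 - (d2 * v) * u1 = d1 * (u2 * v - 1) * (-1) + v * (u2 * d1 - u1 * d2)"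
    by (simp add: algebra_simps)
  hence 1: "int p dvd (d1 - (d2 * v) * u1)" using v d by (simp add: dvd_add dvd_mult2)
  from 1 2 show ?thesis by blast
qed

lemma small_eq: "0 \<le> x \<Longrightarrow> x < m \<Longrightarrow> 0 \<le> y \<Longrightarrow> y < m \<Longrightarrow> m dvd (x - y) \<Longrightarrow> x = (y::int)"
  by (rule cong_less_imp_eq_int) (auto simp: cong_iff_dvd_diff)

lemma galois_u:
  assumes p: "prime p" and q: "prime q" and pq: "p \<noteq> q" and S: "finite S"
    and z: "chiS p q ((j * u1, j * u2), x) S = 0" and j: "\<not> int p dvd j"
  shows "chiS p q ((u1, u2), x) S = 0"
proof -
  have p0: "p > 0" and q0: "q > 0" using p q prime_gt_0_nat by auto
  obtain v where v: "int p dvd (j * v - 1)" "cop v (int p)" using inv_mod_prime[OF p j] by blast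
  have "chiS p q ((v * (j * u1), v * (j * u2)), (1 * fst x, 1 * snd x)) S = 0"
    using chiS_galois[OF p q pq S z v(2), of 1] by simp
  moreover have "chiS p q ((v * (j * u1), v * (j * u2)), (1 * fst x, 1 * snd x)) S = chiS p q ((u1, u2), x) S"
  proof (rule chiS_cong[OF p0 q0])
    have "v * (j * u1) - u1 = (j * v - 1) * u1" "v * (j * u2) - u2 = (j * v - 1) * u2"
      by (simp_all add: algebra_simps)
    then show "int p dvd fst (fst ((v * (j * u1), v * (j * u2)), 1 * fst x, 1 * snd x)) - fst (fst ((u1, u2), x))"
      "int p dvd snd (fst ((v * (j * u1), v * (j * u2)), 1 * fst x, 1 * snd x)) - snd (fst ((u1, u2), x))"
      using v(1) by simp_all
  qed simp_all
  ultimately show ?thesis by simp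
qed

lemma galois_x:
  assumes p: "prime p" and q: "prime q" and pq: "p \<noteq> q" and S: "finite S"
    and z: "chiS p q (a, (j * y1, j * y2)) S = 0" and j: "\<not> int q dvd j"
  shows "chiS p q (a, (y1, y2)) S = 0"
proof -
  have p0: "p > 0" and q0: "q > 0" using p q prime_gt_0_nat by auto
  obtain v where v: "int q dvd (j * v - 1)" "cop v (int q)" using inv_mod_prime[OF q j] by blast
  have c1: "cop 1 (int p)" by simp
  have "chiS p q ((1 * fst a, 1 * snd a), (v * (j * y1), v * (j * y2))) S = 0"
    using chiS_galois[OF p q pq S z c1 v(2)] by simp
  moreover have "chiS p q ((1 * fst a, 1 * snd a), (v * (j * y1), v * (j * y2))) S = chiS p q (a, (y1, y2)) S"
  proof (rule chiS_cong[OF p0 q0])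
    have "v * (j * y1) - y1 = (j * v - 1) * y1" "v * (j * y2) - y2 = (j * v - 1) * y2"
      by (simp_all add: algebra_simps)
    then show "int q dvd fst (snd ((1 * fst a, 1 * snd a), v * (j * y1), v * (j * y2))) - fst (snd (a, y1, y2))"
      "int q dvd snd (snd ((1 * fst a, 1 * snd a), v * (j * y1), v * (j * y2))) - snd (snd (a, y1, y2))"
      using v(1) by simp_all
  qed simp_all
  ultimately show ?thesis by simp
qed



lemma chi0: "chi p q ((0, 0), y) s = ee q (dot2 y (snd s))"
  unfolding chi_def ee_def dot2_def by simp

lemma ee_one_imp:
  assumes q: "q > 0" and c: "0 \<le> c" "c < int q" and e: "ee q c = 1"
  shows "c = 0"
proof -
  have "exp (\<i> * complex_of_real (2 * pi * of_int c / of_nat q)) = 1"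
    using e unfolding ee_def cis_conv_exp .
  then obtain n :: int where n: "2 * pi * of_int c / of_nat q = of_int (2 * n) * pi"
    unfolding exp_eq_1 by auto
  hence "(2 * pi) * (of_int c / of_nat q) = (2 * pi) * (of_int n :: real)" by (simp add: mult_ac)
  moreover have "(2 * pi) \<noteq> (0::real)" by simp
  ultimately have "of_int c / of_nat q = (of_int n :: real)" using mult_left_cancel by blast
  hence "real_of_int c = of_int n * of_nat q" using q by (simp add: field_simps)
  hence "real_of_int c = real_of_int (n * int q)" by simp
  hence cn: "c = n * int q" by (simp only: of_int_eq_iff)
  have "n * int q < 1 * int q" using c cn by simp
  hence n1: "n < 1" using q by (simp only: mult_less_cancel_right)
  have "0 \<le> n * int q" using c cn by simp
  hence "0 \<le> n" using q by (simp add: zero_le_mult_iff)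
  with n1 have "n = 0" by simp
  with cn show ?thesis by simp
qed

lemma geo_sum:
  assumes q: "q > 0" and c: "0 \<le> c" "c < int q"
  shows "(\<Sum>y\<in>{0..<int q}. ee q (y * c)) = (if c = 0 then of_nat q else 0)"
proof -
  have "{0..<int q} = int ` {..<q}" by (simp add: image_int_atLeastLessThan lessThan_atLeast0)
  hence "(\<Sum>y\<in>{0..<int q}. ee q (y * c)) = (\<Sum>k<q. ee q (int k * c))"
    by (simp add: sum.reindex)
  also have "\<dots> = (\<Sum>k<q. ee q c ^ k)" by (simp add: ee_pow)
  also have "\<dots> = (if c = 0 then of_nat q else 0)"
  proof (cases "c = 0")
    case True
    then show ?thesis by (simp add: ee_def)
  next
    case False
    hence ne: "ee q c \<noteq> 1" using ee_one_imp[OF q c] by blast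
    have "ee q c ^ q = 1" using ee_n[OF q, of c] by (simp add: ee_pow)
    then show ?thesis using ne False by (simp add: sum_gp_strict)
  qed
  finally show ?thesis .
qed

lemma orth:
  assumes q: "q > 0" and b: "b \<in> Zsq q"
  shows "(\<Sum>y\<in>Zsq q. ee q (dot2 y b)) = (if b = (0, 0) then of_nat (q * q) else 0)"
proof -
  obtain b1 b2 where bb: "b = (b1, b2)" by (cases b)
  have b1: "0 \<le> b1" "b1 < int q" and b2: "0 \<le> b2" "b2 < int q" using b unfolding bb Zsq_def by auto
  have "(\<Sum>y\<in>Zsq q. ee q (dot2 y b)) = (\<Sum>y\<in>{0..<int q} \<times> {0..<int q}. ee q (fst y * b1) * ee q (snd y * b2))"
    unfolding Zsq_def bb dot2_def by (simp add: ee_add)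
  also have "\<dots> = (\<Sum>y1\<in>{0..<int q}. \<Sum>y2\<in>{0..<int q}. ee q (y1 * b1) * ee q (y2 * b2))"
    by (simp add: sum.cartesian_product split_def)
  also have "\<dots> = (\<Sum>y1\<in>{0..<int q}. ee q (y1 * b1)) * (\<Sum>y2\<in>{0..<int q}. ee q (y2 * b2))"
    by (simp add: sum_product)
  also have "\<dots> = (if b = (0, 0) then of_nat (q * q) else 0)"
    unfolding geo_sum[OF q b1] geo_sum[OF q b2] bb by simp
  finally show ?thesis .
qed

lemma fourier:
  assumes q: "prime q" and p: "p > 0" and S: "finite S" and sub: "S \<subseteq> Gset p q"
    and z: "\<forall>y\<in>Zsq q. y \<noteq> (0, 0) \<longrightarrow> chiS p q ((0, 0), y) S = 0"
  shows "q * q dvd card S"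
proof -
  have q0: "q > 0" using q prime_gt_0_nat by blast
  have z0: "(0::int, 0::int) \<in> Zsq q" unfolding Zsq_def using q0 by simp
  have fin: "finite (Zsq q)" unfolding Zsq_def by simp
  have "(\<Sum>y\<in>Zsq q. chiS p q ((0, 0), y) S) = chiS p q ((0, 0), (0, 0)) S + (\<Sum>y\<in>Zsq q - {(0, 0)}. chiS p q ((0, 0), y) S)"
    using sum.remove[OF fin z0] by simp
  also have "(\<Sum>y\<in>Zsq q - {(0, 0)}. chiS p q ((0, 0), y) S) = 0"
    using z by (intro sum.neutral) auto
  also have "chiS p q ((0, 0), (0, 0)) S = of_nat (card S)"
    unfolding chiS_def chi0 by (simp add: ee_def dot2_def)
  finally have L: "(\<Sum>y\<in>Zsq q. chiS p q ((0, 0), y) S) = of_nat (card S)" by simp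
  have "(\<Sum>y\<in>Zsq q. chiS p q ((0, 0), y) S) = (\<Sum>s\<in>S. \<Sum>y\<in>Zsq q. ee q (dot2 y (snd s)))"
    unfolding chiS_def chi0 by (rule sum.swap)
  also have "\<dots> = (\<Sum>s\<in>S. if snd s = (0, 0) then of_nat (q * q) else 0)"
  proof (rule sum.cong[OF refl])
    fix s assume "s \<in> S"
    hence "snd s \<in> Zsq q" using sub unfolding Gset_def by auto
    then show "(\<Sum>y\<in>Zsq q. ee q (dot2 y (snd s))) = (if snd s = (0, 0) then of_nat (q * q) else 0)"
      by (rule orth[OF q0])
  qed
  also have "\<dots> = of_nat (q * q) * of_nat (card {s\<in>S. snd s = (0, 0)})"
    using S by (simp add: sum.If_cases Int_def conj_commute)
  finally have "of_nat (card S) = (of_nat (q * q * card {s\<in>S. snd s = (0, 0)}) :: complex)"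
    using L by simp
  hence "card S = q * q * card {s\<in>S. snd s = (0, 0)}" by (simp only: of_nat_eq_iff)
  then show ?thesis by simp
qed



lemma mod_dvd_diff: "m dvd (x - y) \<Longrightarrow> m dvd (x mod m - (y::int))"
proof -
  assume a: "m dvd (x - y)"
  have eq: "x mod m - y = (x - y) - m * (x div m)" by (simp add: minus_div_mult_eq_mod[symmetric] algebra_simps)
  have "m dvd (x - y) - m * (x div m)" by (rule dvd_diff[OF a]) simp
  then show ?thesis by (simp only: eq)
qed

lemma Zsq_nz:
  assumes "(u1, u2) \<in> Zsq p" "(u1, u2) \<noteq> (0, 0)"
  shows "\<not> (int p dvd u1 \<and> int p dvd u2)"
proof
  assume d: "int p dvd u1 \<and> int p dvd u2"
  have r: "0 \<le> u1" "u1 < int p" "0 \<le> u2" "u2 < int p" using assms(1) unfolding Zsq_def by auto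
  have "u1 = 0" using small_eq[OF r(1,2), of 0] d r by simp
  moreover have "u2 = 0" using small_eq[OF r(3,4), of 0] d r by simp
  ultimately show False using assms(2) by simp
qed

lemma half:
  assumes p: "prime p" and q: "prime q" and pq: "p \<noteq> q" and sub: "S \<subseteq> Gset p q"
    and sp: "spectral p q S" and nq: "\<not> q * q dvd card S" and big: "p * q < card S"
  shows "\<forall>u\<in>Zsq p. u \<noteq> (0, 0) \<longrightarrow> (\<exists>x\<in>Zsq q. chiS p q (u, x) S = 0)"
proof (intro ballI impI, rule ccontr)
  fix u assume uZ: "u \<in> Zsq p" and u0: "u \<noteq> (0, 0)" and H: "\<not> (\<exists>x\<in>Zsq q. chiS p q (u, x) S = 0)"
  have p0: "p > 0" and q0: "q > 0" using p q prime_gt_0_nat by auto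
  have finG: "finite (Gset p q)" unfolding Gset_def Zsq_def by simp
  have S: "finite S" using finite_subset[OF sub finG] .
  obtain L where L: "L \<subseteq> Gset p q" "card L = card S"
    and orth: "\<forall>l\<in>L. \<forall>m\<in>L. l \<noteq> m \<longrightarrow> chiS p q (subG p q l m) S = 0"
    using sp unfolding spectral_def by blast
  obtain y0 where y0: "y0 \<in> Zsq q" "y0 \<noteq> (0, 0)" "chiS p q ((0, 0), y0) S \<noteq> 0"
    using fourier[OF q p0 S sub] nq by blast
  obtain u1 u2 where uu: "u = (u1, u2)" by (cases u)
  obtain y1 y2 where yy: "y0 = (y1, y2)" by (cases y0)
  have ndu: "\<not> (int p dvd u1 \<and> int p dvd u2)" using Zsq_nz uZ u0 uu by blast
  have ndy: "\<not> (int q dvd y1 \<and> int q dvd y2)" using Zsq_nz y0 yy by blast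
  define \<phi> where "\<phi> l = ((u2 * fst (fst l) - u1 * snd (fst l)) mod int p,
                        (y2 * fst (snd l) - y1 * snd (snd l)) mod int q)" for l :: elt
  have inj: "inj_on \<phi> L"
  proof (rule inj_onI, rule ccontr)
    fix l m assume lL: "l \<in> L" and mL: "m \<in> L" and eq: "\<phi> l = \<phi> m" and ne: "l \<noteq> m"
    obtain a1 a2 b1 b2 where ll: "l = ((a1, a2), (b1, b2))" by (metis prod.collapse)
    obtain c1 c2 e1 e2 where mm: "m = ((c1, c2), (e1, e2))" by (metis prod.collapse)
    have ra: "0 \<le> a1" "a1 < int p" "0 \<le> a2" "a2 < int p" "0 \<le> b1" "b1 < int q" "0 \<le> b2" "b2 < int q"
      using lL L(1) unfolding ll Gset_def Zsq_def by auto
    have rc: "0 \<le> c1" "c1 < int p" "0 \<le> c2" "c2 < int p" "0 \<le> e1" "e1 < int q" "0 \<le> e2" "e2 < int q"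
      using mL L(1) unfolding mm Gset_def Zsq_def by auto
    have Z: "chiS p q (((a1 - c1) mod int p, (a2 - c2) mod int p), ((b1 - e1) mod int q, (b2 - e2) mod int q)) S = 0"
    proof -
      have "chiS p q (subG p q l m) S = 0" using orth lL mL ne by blast
      then show ?thesis unfolding ll mm subG_def by simp
    qed
    have e1': "(u2 * a1 - u1 * a2) mod int p = (u2 * c1 - u1 * c2) mod int p"
      and e2': "(y2 * b1 - y1 * b2) mod int q = (y2 * e1 - y1 * e2) mod int q"
      using eq unfolding \<phi>_def ll mm by simp_all
    have "int p dvd (u2 * a1 - u1 * a2) - (u2 * c1 - u1 * c2)" using e1' by (simp add: mod_eq_dvd_iff)
    hence "int p dvd u2 * (a1 - c1) - u1 * (a2 - c2)" by (simp add: algebra_simps)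
    from kernel2[OF p ndu this] obtain j where
      j: "int p dvd (a1 - c1) - j * u1" "int p dvd (a2 - c2) - j * u2" by blast
    show False
    proof (cases "int p dvd j")
      case True
      have "int p dvd j * u1" "int p dvd j * u2" using True by simp_all
      hence "int p dvd (a1 - c1)" "int p dvd (a2 - c2)" using j
        by (metis diff_add_cancel dvd_add)+
      hence a1: "a1 = c1" and a2: "a2 = c2" using small_eq ra rc by blast+
      have "int q dvd (y2 * b1 - y1 * b2) - (y2 * e1 - y1 * e2)" using e2' by (simp add: mod_eq_dvd_iff)
      hence "int q dvd y2 * (b1 - e1) - y1 * (b2 - e2)" by (simp add: algebra_simps)
      from kernel2[OF q ndy this] obtain j' where
        j': "int q dvd (b1 - e1) - j' * y1" "int q dvd (b2 - e2) - j' * y2" by blast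
      show False
      proof (cases "int q dvd j'")
        case True
        have "int q dvd j' * y1" "int q dvd j' * y2" using True by simp_all
        hence "int q dvd (b1 - e1)" "int q dvd (b2 - e2)" using j'
          by (metis diff_add_cancel dvd_add)+
        hence "b1 = e1" "b2 = e2" using small_eq ra rc by blast+
        with a1 a2 ne show False unfolding ll mm by simp
      next
        case False
        have "chiS p q (((a1 - c1) mod int p, (a2 - c2) mod int p), ((b1 - e1) mod int q, (b2 - e2) mod int q)) S
            = chiS p q ((0, 0), (j' * y1, j' * y2)) S"
          by (rule chiS_cong[OF p0 q0]) (simp_all add: a1 a2 mod_dvd_diff j')
        with Z have "chiS p q ((0, 0), (j' * y1, j' * y2)) S = 0" by simp
        from galois_x[OF p q pq S this False] y0(3) yy show False by simp
      qed
    next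
      case False
      have "chiS p q (((a1 - c1) mod int p, (a2 - c2) mod int p), ((b1 - e1) mod int q, (b2 - e2) mod int q)) S
          = chiS p q ((j * u1, j * u2), ((b1 - e1) mod int q, (b2 - e2) mod int q)) S"
        by (rule chiS_cong[OF p0 q0]) (simp_all add: mod_dvd_diff j)
      with Z have "chiS p q ((j * u1, j * u2), ((b1 - e1) mod int q, (b2 - e2) mod int q)) S = 0" by simp
      from galois_u[OF p q pq S this False]
      have "chiS p q (u, ((b1 - e1) mod int q, (b2 - e2) mod int q)) S = 0" using uu by simp
      moreover have "((b1 - e1) mod int q, (b2 - e2) mod int q) \<in> Zsq q" unfolding Zsq_def using q0 by simp
      ultimately show False using H by blast
    qed
  qed
  have img: "\<phi> ` L \<subseteq> {0..<int p} \<times> {0..<int q}" unfolding \<phi>_def using p0 q0 by auto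
  have "card L \<le> card ({0..<int p} \<times> {0..<int q})"
    by (rule card_inj_on_le[OF inj img]) simp
  also have "\<dots> = p * q" by (simp add: card_cartesian_product)
  finally show False using L(2) big by simp
qed



definition sw :: "elt \<Rightarrow> elt" where "sw x = (snd x, fst x)"

lemma sw_sw[simp]: "sw (sw x) = x" unfolding sw_def by simp

lemma inj_sw: "inj sw" by (metis injI sw_sw)

lemma Gset_sw: "sw ` Gset p q = Gset q p"
  unfolding Gset_def sw_def by (auto intro!: rev_image_eqI[where x = "(b, a)" for a b])

lemma chi_sw: "chi q p (sw w) (sw g) = chi p q w g"
  unfolding chi_def sw_def by (simp add: add.commute)

lemma chiS_sw: "chiS q p (sw w) (sw ` S) = chiS p q w S"
  unfolding chiS_def by (simp add: sum.reindex inj_on_subset[OF inj_sw] chi_sw)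

lemma subG_sw: "subG q p (sw l) (sw m) = sw (subG p q l m)"
  unfolding subG_def sw_def by simp

lemma spectral_sw:
  assumes "spectral p q S" shows "spectral q p (sw ` S)"
proof -
  obtain L where L: "L \<subseteq> Gset p q" "card L = card S"
    and orth: "\<forall>l\<in>L. \<forall>m\<in>L. l \<noteq> m \<longrightarrow> chiS p q (subG p q l m) S = 0"
    using assms unfolding spectral_def by blast
  have "sw ` L \<subseteq> Gset q p" using L(1) Gset_sw by blast
  moreover have "card (sw ` L) = card (sw ` S)"
    using L(2) by (simp add: card_image inj_on_subset[OF inj_sw])
  moreover have "\<forall>l\<in>sw ` L. \<forall>m\<in>sw ` L. l \<noteq> m \<longrightarrow> chiS q p (subG q p l m) (sw ` S) = 0"
    using orth by (auto simp: subG_sw chiS_sw)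
  ultimately show ?thesis unfolding spectral_def by blast
qed

theorem lemma4p6:
  fixes p q :: nat and S :: "elt set"
  assumes "prime p" and "prime q" and "p \<noteq> q"
    and "S \<subseteq> Gset p q"
    and "spectral p q S"
    and "gcd (card S) (p^2 * q^2) = p * q"
    and "p * q < card S" and "card S < p * q * min p q"
  shows "(\<forall>u\<in>Zsq p. u \<noteq> (0,0) \<longrightarrow> (\<exists>x\<in>Zsq q. chiS p q (u, x) S = 0)) \<and>
         (\<forall>v\<in>Zsq q. v \<noteq> (0,0) \<longrightarrow> (\<exists>y\<in>Zsq p. chiS p q (y, v) S = 0))"
proof
  have p: "prime p" and q: "prime q" using assms by auto
  have p0: "p > 0" and q0: "q > 0" using p q prime_gt_0_nat by auto
  have nq: "\<not> q * q dvd card S"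
  proof
    assume d: "q * q dvd card S"
    have "q * q dvd p ^ 2 * q ^ 2" by (simp add: power2_eq_square)
    with d have "q * q dvd gcd (card S) (p ^ 2 * q ^ 2)" by simp
    hence "q * q dvd p * q" using assms(6) by simp
    hence "q dvd p" using q0 by (simp add: mult.commute)
    from primes_dvd_imp_eq[OF q p this] assms(3) show False by simp
  qed
  have np: "\<not> p * p dvd card S"
  proof
    assume d: "p * p dvd card S"
    have "p * p dvd p ^ 2 * q ^ 2" by (simp add: power2_eq_square)
    with d have "p * p dvd gcd (card S) (p ^ 2 * q ^ 2)" by simp
    hence "p * p dvd p * q" using assms(6) by simp
    hence "p dvd q" using p0 by simp
    from primes_dvd_imp_eq[OF p q this] assms(3) show False by simp
  qed
  show "\<forall>u\<in>Zsq p. u \<noteq> (0,0) \<longrightarrow> (\<exists>x\<in>Zsq q. chiS p q (u, x) S = 0)"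
    using half[OF p q assms(3,4,5) nq assms(7)] .
  show "\<forall>v\<in>Zsq q. v \<noteq> (0,0) \<longrightarrow> (\<exists>y\<in>Zsq p. chiS p q (y, v) S = 0)"
  proof (intro ballI impI)
    fix v assume v: "v \<in> Zsq q" "v \<noteq> (0, 0)"
    have sub': "sw ` S \<subseteq> Gset q p" using assms(4) Gset_sw by blast
    have card': "card (sw ` S) = card S" by (simp add: card_image inj_on_subset[OF inj_sw])
    have h: "\<forall>u\<in>Zsq q. u \<noteq> (0, 0) \<longrightarrow> (\<exists>x\<in>Zsq p. chiS q p (u, x) (sw ` S) = 0)"
      by (rule half[OF q p assms(3)[symmetric] sub' spectral_sw[OF assms(5)]])
         (use np assms(7) card' in \<open>simp_all add: mult.commute\<close>)
    from h v obtain x where x: "x \<in> Zsq p" "chiS q p (v, x) (sw ` S) = 0" by blast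
    have "chiS q p (v, x) (sw ` S) = chiS p q (x, v) S"
      using chiS_sw[where w="(x, v)" and S=S and p=p and q=q] by (simp add: sw_def)
    with x show "\<exists>y\<in>Zsq p. chiS p q (y, v) S = 0" by auto
  qed
qed

end
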